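(* Restrict attention to feasible strategies $\boldsymbol{\phi}\in\mathcal{D}_{\boldsymbol{\phi}}(\boldsymbol{r})$ whose traffic satisfies $t_i(a,k)>0$ for all $i\in\mathcal{V}$ and $(a,k)\in\mathcal{S}$. On this set the map $\boldsymbol{\phi}\mapsto\boldsymbol{f}(\boldsymbol{\phi})=[f_{ij}(a,k),g_i(a,k)]$ is a bijection onto its image, with inverse $\boldsymbol{f}\mapsto\boldsymbol{\phi}(\boldsymbol{f})$ given by $\phi_{ij}(a,k)=f_{ij}(a,k)/t_i(a,k)$ and $\phi_{i0}(a,k)=g_i(a,k)/t_i(a,k)$, where $t_i(a,k)$ is computed from $\boldsymbol{f}$ by $t_i(a,k)=\sum_j f_{ij}(a,k)+g_i(a,k)$ (plus, if $k=|\mathcal{T}_a|$ and $i=d_a$, the arriving traffic). Moreover, $T$ is geodesically convex in $\boldsymbol{\phi}$ on this set: for any two such strategies $\boldsymbol{\phi}_1,\boldsymbol{\phi}_2$, the curve $\gamma_{\boldsymbol{\phi}_1\boldsymbol{\phi}_2}(s)=\boldsymbol{\phi}\big((1-s)\boldsymbol{f}(\boldsymbol{\phi}_1)+s\,\boldsymbol{f}(\boldsymbol{\phi}_2)\big)$, $s\in[0,1]$, joins $\boldsymbol{\phi}_1$ and $\boldsymbol{\phi}_2$ within the feasible set, and $s\mapsto T(\gamma_{\boldsymbol{\phi}_1\boldsymbol{\phi}_2}(s))$ is convex on $[0,1]$.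
   Context: Service-chain computing network model. $\mathcal{G}=(\mathcal{V},\mathcal{E})$ is a directed, strongly connected graph whose links are bidirectional. $\mathcal{A}$ is a finite set of applications; application $a$ has a destination $d_a\in\mathcal{V}$ and a chain of $|\mathcal{T}_a|$ tasks performed in order. The set of stages is $\mathcal{S}=\{(a,k): a\in\mathcal{A}, k=0,1,\dots,|\mathcal{T}_a|\}$, with packet sizes $L_{(a,k)}>0$. Exogenous input rates are $r_i(a)\ge 0$. The forwarding strategy $\boldsymbol{\phi}=[\phi_{ij}(a,k)]_{(a,k)\in\mathcal{S},i\in\mathcal{V},j\in\{0\}\cup\mathcal{V}}$ has $\phi_{ij}(a,k)\in[0,1]$; for $j\in\mathcal{V}$ it is the fraction of node $i$'s stage-$(a,k)$ traffic sent to node $j$ (with $\phi_{ij}(a,k)=0$ if $(i,j)\notin\mathcal{E}$), and $\phi_{i0}(a,k)$ is the fraction sent to $i$'s local processor, which converts each stage-$(a,k)$ packet into one stage-$(a,k+1)$ packet; $\phi_{i0}(a,|\mathcal{T}_a|)=0$. Flow conservation: $\sum_{j\in\{0\}\cup\mathcal{V}}\phi_{ij}(a,k)=0$ if $k=|\mathcal{T}_a|$ and $i=d_a$, and $=1$ otherwise. Traffic $t_i(a,k)$ satisfies $t_i(a,0)=\sum_{j\in\mathcal{V}}t_j(a,0)\phi_{ji}(a,0)+r_i(a)$ and, for $k\ge1$, $t_i(a,k)=\sum_{j\in\mathcal{V}}t_j(a,k)\phi_{ji}(a,k)+t_i(a,k-1)\phi_{i0}(a,k-1)$. Link flows $f_{ij}(a,k)=t_i(a,k)\phi_{ij}(a,k)$,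 processor inputs $g_i(a,k)=t_i(a,k)\phi_{i0}(a,k)$; the flow vector $\boldsymbol{f}=[f_{ij}(a,k),g_i(a,k)]$ satisfies the linear conservation $\sum_j f_{ji}(a,k)+g_i(a,k-1)=\sum_j f_{ij}(a,k)+g_i(a,k)$ (with $g_i(a,-1):=r_i(a)$, and the right side replaced by $0$ plus the exiting traffic at $i=d_a$, $k=|\mathcal{T}_a|$), nonnegativity, and so forms a convex set. Total link flow $F_{ij}=\sum_{(a,k)}L_{(a,k)}f_{ij}(a,k)$, workload $G_i=\sum_{(a,k)}w_i(a,k)g_i(a,k)$ with $w_i(a,k)>0$. $D_{ij}$, $C_i$ are increasing, continuously differentiable, convex. Total cost $T(\boldsymbol{\phi})=\sum_{(i,j)\in\mathcal{E}}D_{ij}(F_{ij})+\sum_{i\in\mathcal{V}}C_i(G_i)$. $\mathcal{D}_{\boldsymbol{\phi}}(\boldsymbol{r})$ is the set of $\boldsymbol{\phi}$ satisfying flow conservation with finite total cost. A function $h$ on a set $C\subset\mathbb{R}^n$ is geodesically convex with respect to a family of curves $\gamma_{x_1x_2}:[0,1]\to C$ joining $x_1$ to $x_2$ if $s\mapsto h(\gamma_{x_1x_2}(s))$ is convex for all $x_1,x_2\in C$. *)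

theory Defs
  imports "HOL-Analysis.Analysis"
begin

text \<open>A forwarding strategy / flow vector is a function
 i j a k, where j = None stands for the local processor (index 0 of the paper) and
 j = Some j' for the neighbour node j'.\<close>

record ('v, 'a) network =
  nodes   :: "'v set"
  links   :: "('v \<times> 'v) set"
  apps    :: "'a set"
  dest    :: "'a \<Rightarrow> 'v"
  ntasks  :: "'a \<Rightarrow> nat"
  rate    :: "'v \<Rightarrow> 'a \<Rightarrow> real"
  pktsize :: "'a \<Rightarrow> nat \<Rightarrow> real"
  work    :: "'v \<Rightarrow> 'a \<Rightarrow> nat \<Rightarrow> real"

type_synonym ('v, 'a) strategy = "'v \<Rightarrow> 'v option \<Rightarrow> 'a \<Rightarrow> nat \<Rightarrow> real"
type_synonym ('v, 'a) traffic_vec = "'v \<Rightarrow> 'a \<Rightarrow> nat \<Rightarrow> real"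

definition well_formed_network :: "('v, 'a) network \<Rightarrow> bool" where
  "well_formed_network N \<longleftrightarrow>
     finite (nodes N) \<and> finite (apps N) \<and>
     links N \<subseteq> nodes N \<times> nodes N \<and>
     (\<forall>i j. (i, j) \<in> links N \<longrightarrow> (j, i) \<in> links N) \<and>
     (\<forall>i\<in>nodes N. \<forall>j\<in>nodes N. (i, j) \<in> (links N)\<^sup>*) \<and>
     (\<forall>a\<in>apps N. dest N a \<in> nodes N) \<and>
     (\<forall>i\<in>nodes N. \<forall>a\<in>apps N. rate N i a \<ge> 0) \<and>
     (\<forall>a\<in>apps N. \<forall>k\<le>ntasks N a. pktsize N a k > 0) \<and>
     (\<forall>i\<in>nodes N. \<forall>a\<in>apps N. \<forall>k\<le>ntasks N a. work N i a k > 0)"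

definition in_dom :: "('v, 'a) network \<Rightarrow> 'v \<Rightarrow> 'a \<Rightarrow> nat \<Rightarrow> bool" where
  "in_dom N i a k \<longleftrightarrow> i \<in> nodes N \<and> a \<in> apps N \<and> k \<le> ntasks N a"

definition in_targets :: "('v, 'a) network \<Rightarrow> 'v option \<Rightarrow> bool" where
  "in_targets N j \<longleftrightarrow> (case j of None \<Rightarrow> True | Some j' \<Rightarrow> j' \<in> nodes N)"

definition flow_conservation :: "('v, 'a) network \<Rightarrow> ('v, 'a) strategy \<Rightarrow> bool" where
  "flow_conservation N phi \<longleftrightarrow>
     (\<forall>i j a k. \<not> (in_dom N i a k \<and> in_targets N j) \<longrightarrow> phi i j a k = 0) \<and>
     (\<forall>i j a k. in_dom N i a k \<and> in_targets N j \<longrightarrow> 0 \<le> phi i j a k \<and> phi i j a k \<le> 1) \<and>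
     (\<forall>i j a k. in_dom N i a k \<and> (i, j) \<notin> links N \<longrightarrow> phi i (Some j) a k = 0) \<and>
     (\<forall>i a. phi i None a (ntasks N a) = 0) \<and>
     (\<forall>i a k. in_dom N i a k \<longrightarrow>
        (\<Sum>j\<in>nodes N. phi i (Some j) a k) + phi i None a k =
        (if k = ntasks N a \<and> i = dest N a then 0 else 1))"

definition traffic_eqs :: "('v, 'a) network \<Rightarrow> ('v, 'a) strategy \<Rightarrow> ('v, 'a) traffic_vec \<Rightarrow> bool" where
  "traffic_eqs N phi t \<longleftrightarrow>
     (\<forall>i a k. in_dom N i a k \<longrightarrow>
        t i a k = (\<Sum>j\<in>nodes N. t j a k * phi j (Some i) a k) +
                  (if k = 0 then rate N i a else t i a (k - 1) * phi i None a (k - 1))) \<and>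
     (\<forall>i a k. \<not> in_dom N i a k \<longrightarrow> t i a k = 0)"

definition traffic :: "('v, 'a) network \<Rightarrow> ('v, 'a) strategy \<Rightarrow> ('v, 'a) traffic_vec" where
  "traffic N phi = (THE t. traffic_eqs N phi t)"

text \<open>D_phi(r): strategies satisfying flow conservation whose traffic is well defined
 (a unique finite solution of the traffic equations; then the total cost is finite since
 the cost functions are real-valued).\<close>
definition feasible :: "('v, 'a) network \<Rightarrow> ('v, 'a) strategy \<Rightarrow> bool" where
  "feasible N phi \<longleftrightarrow> flow_conservation N phi \<and> (\<exists>!t. traffic_eqs N phi t)"

definition pos_feasible :: "('v, 'a) network \<Rightarrow> ('v, 'a) strategy set" where
  "pos_feasible N = {phi. feasible N phi \<and>
      (\<forall>i a k. in_dom N i a k \<longrightarrow> traffic N phi i a k > 0)}"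

text \<open>Flow vector f(phi): f i (Some j) a k = f_ij(a,k), f i None a k = g_i(a,k).\<close>
definition flow_of :: "('v, 'a) network \<Rightarrow> ('v, 'a) strategy \<Rightarrow> ('v, 'a) strategy" where
  "flow_of N phi = (\<lambda>i j a k. traffic N phi i a k * phi i j a k)"

definition outflow :: "('v, 'a) network \<Rightarrow> ('v, 'a) strategy \<Rightarrow> 'v \<Rightarrow> 'a \<Rightarrow> nat \<Rightarrow> real" where
  "outflow N f i a k = (\<Sum>j\<in>nodes N. f i (Some j) a k) + f i None a k"

definition inflow :: "('v, 'a) network \<Rightarrow> ('v, 'a) strategy \<Rightarrow> 'v \<Rightarrow> 'a \<Rightarrow> nat \<Rightarrow> real" where
  "inflow N f i a k = (\<Sum>j\<in>nodes N. f j (Some i) a k) +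
     (if k = 0 then rate N i a else f i None a (k - 1))"

definition traffic_of_flow :: "('v, 'a) network \<Rightarrow> ('v, 'a) strategy \<Rightarrow> ('v, 'a) traffic_vec" where
  "traffic_of_flow N f i a k = outflow N f i a k +
     (if k = ntasks N a \<and> i = dest N a then inflow N f i a k else 0)"

definition phi_of :: "('v, 'a) network \<Rightarrow> ('v, 'a) strategy \<Rightarrow> ('v, 'a) strategy" where
  "phi_of N f = (\<lambda>i j a k. if in_dom N i a k \<and> in_targets N j
                           then f i j a k / traffic_of_flow N f i a k else 0)"

definition total_cost :: "('v, 'a) network \<Rightarrow> ('v \<Rightarrow> 'v \<Rightarrow> real \<Rightarrow> real) \<Rightarrow> ('v \<Rightarrow> real \<Rightarrow> real)
     \<Rightarrow> ('v, 'a) strategy \<Rightarrow> real" where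
  "total_cost N D C phi =
     (let f = flow_of N phi in
       (\<Sum>(i, j)\<in>links N. D i j (\<Sum>a\<in>apps N. \<Sum>k\<le>ntasks N a. pktsize N a k * f i (Some j) a k)) +
       (\<Sum>i\<in>nodes N. C i (\<Sum>a\<in>apps N. \<Sum>k\<le>ntasks N a. work N i a k * f i None a k)))"

definition gamma :: "('v, 'a) network \<Rightarrow> ('v, 'a) strategy \<Rightarrow> ('v, 'a) strategy \<Rightarrow> real
     \<Rightarrow> ('v, 'a) strategy" where
  "gamma N phi1 phi2 s =
     phi_of N (\<lambda>i j a k. (1 - s) * flow_of N phi1 i j a k + s * flow_of N phi2 i j a k)"

definition curve_family :: "'x set \<Rightarrow> ('x \<Rightarrow> 'x \<Rightarrow> real \<Rightarrow> 'x) \<Rightarrow> bool" where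
  "curve_family S gam \<longleftrightarrow>
     (\<forall>x1\<in>S. \<forall>x2\<in>S. gam x1 x2 0 = x1 \<and> gam x1 x2 1 = x2 \<and>
        (\<forall>s\<in>{0..1}. gam x1 x2 s \<in> S))"

definition geodesically_convex :: "'x set \<Rightarrow> ('x \<Rightarrow> 'x \<Rightarrow> real \<Rightarrow> 'x) \<Rightarrow> ('x \<Rightarrow> real) \<Rightarrow> bool" where
  "geodesically_convex S gam h \<longleftrightarrow>
     (\<forall>x1\<in>S. \<forall>x2\<in>S. convex_on {0..1} (\<lambda>s. h (gam x1 x2 s)))"

end

theory Submission
  imports Defs
begin

lemma convex_affine_comp:
  fixes g :: "real \<Rightarrow> real"
  assumes "convex_on UNIV g"
  shows "convex_on {0..1} (\<lambda>s. g ((1 - s) * x + s * y))"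
proof (rule convex_onI)
  fix t u w :: real
  assume t: "0 < t" "t < 1"
  have eq: "(1 - ((1 - t) *\<^sub>R u + t *\<^sub>R w)) * x + ((1 - t) *\<^sub>R u + t *\<^sub>R w) * y
     = (1 - t) *\<^sub>R ((1 - u) * x + u * y) + t *\<^sub>R ((1 - w) * x + w * y)"
    by (simp add: algebra_simps)
  show "g ((1 - ((1 - t) *\<^sub>R u + t *\<^sub>R w)) * x + ((1 - t) *\<^sub>R u + t *\<^sub>R w) * y)
         \<le> (1 - t) * g ((1 - u) * x + u * y) + t * g ((1 - w) * x + w * y)"
    unfolding eq using convex_onD[OF assms, of t] t by simp
qed (simp add: convex_real_interval)

lemma convex_on_sum_fun:
  assumes "finite A" "convex S" "\<And>x. x \<in> A \<Longrightarrow> convex_on S (f x)"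
  shows "convex_on S (\<lambda>s. \<Sum>x\<in>A. f x s)"
  using assms(1,3)
proof (induction A rule: finite_induct)
  case empty then show ?case using assms(2) by (simp add: convex_on_const)
next
  case (insert a A) then show ?case by (simp add: convex_on_add)
qed


lemma closed_class:
  fixes P :: "'v \<Rightarrow> 'v \<Rightarrow> real" and d :: "'v \<Rightarrow> real"
  assumes fin: "finite V"
    and Pnn: "\<And>i j. i \<in> V \<Longrightarrow> j \<in> V \<Longrightarrow> P j i \<ge> 0"
    and R1: "\<And>j. j \<in> V \<Longrightarrow> (\<Sum>i\<in>V. P j i) \<le> 1"
    and H: "\<And>i. i \<in> V \<Longrightarrow> d i = (\<Sum>j\<in>V. d j * P j i)"
    and j0: "j0 \<in> V" "d j0 \<noteq> 0"
  shows "\<exists>C\<subseteq>V. j0 \<in> C \<and> (\<forall>j\<in>C. \<forall>i\<in>V. P j i \<noteq> 0 \<longrightarrow> i \<in> C)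
           \<and> (\<forall>j\<in>C. (\<Sum>i\<in>V. P j i) = 1)"
proof -
  define g where "g i = (\<Sum>j\<in>V. \<bar>d j\<bar> * P j i) - \<bar>d i\<bar>" for i
  define h where "h j = \<bar>d j\<bar> * (1 - (\<Sum>i\<in>V. P j i))" for j
  have g0: "g i \<ge> 0" if "i \<in> V" for i
  proof -
    have "\<bar>d i\<bar> = \<bar>\<Sum>j\<in>V. d j * P j i\<bar>" using H that by simp
    also have "\<dots> \<le> (\<Sum>j\<in>V. \<bar>d j * P j i\<bar>)" by (rule sum_abs)
    also have "\<dots> = (\<Sum>j\<in>V. \<bar>d j\<bar> * P j i)"
      by (rule sum.cong) (use Pnn that in \<open>auto simp: abs_mult\<close>)
    finally show ?thesis unfolding g_def by simp
  qed
  have h0: "h j \<ge> 0" if "j \<in> V" for j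
    unfolding h_def using R1[OF that] by simp
  have swap: "(\<Sum>i\<in>V. \<Sum>j\<in>V. \<bar>d j\<bar> * P j i) = (\<Sum>j\<in>V. \<bar>d j\<bar> * (\<Sum>i\<in>V. P j i))"
    by (subst sum.swap) (simp add: sum_distrib_left)
  have sgh: "(\<Sum>i\<in>V. g i) + (\<Sum>j\<in>V. h j) = 0"
    unfolding g_def h_def using swap
    by (simp add: sum_subtractf algebra_simps sum.distrib sum_distrib_left)
  have sg: "(\<Sum>i\<in>V. g i) \<ge> 0" by (rule sum_nonneg) (use g0 in auto)
  have sh: "(\<Sum>i\<in>V. h i) \<ge> 0" by (rule sum_nonneg) (use h0 in auto)
  have gz: "\<forall>i\<in>V. g i = 0"
    using sum_nonneg_eq_0_iff[OF fin, of g] g0 sg sh sgh by simp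
  have hz: "\<forall>i\<in>V. h i = 0"
    using sum_nonneg_eq_0_iff[OF fin, of h] h0 sg sh sgh by simp
  define C where "C = {j\<in>V. d j \<noteq> 0}"
  have "\<forall>j\<in>C. \<forall>i\<in>V. P j i \<noteq> 0 \<longrightarrow> i \<in> C"
  proof (intro ballI impI)
    fix j i assume j: "j \<in> C" and i: "i \<in> V" and p: "P j i \<noteq> 0"
    have pp: "P j i > 0" using Pnn[OF i] j p unfolding C_def by force
    have "\<bar>d j\<bar> * P j i \<le> (\<Sum>l\<in>V. \<bar>d l\<bar> * P l i)"
      by (rule member_le_sum) (use j Pnn i C_def fin in auto)
    also have "\<dots> = \<bar>d i\<bar>" using gz i unfolding g_def by simp
    finally have "\<bar>d i\<bar> > 0" using pp j unfolding C_def
      by (smt (verit) mult_pos_pos zero_less_abs_iff mem_Collect_eq)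
    then show "i \<in> C" using i unfolding C_def by auto
  qed
  moreover have "\<forall>j\<in>C. (\<Sum>i\<in>V. P j i) = 1"
  proof
    fix j assume j: "j \<in> C"
    then have "h j = 0" "d j \<noteq> 0" "j \<in> V" using hz unfolding C_def by auto
    then show "(\<Sum>i\<in>V. P j i) = 1" unfolding h_def by simp
  qed
  ultimately show ?thesis using j0 unfolding C_def by blast
qed

lemma closed_restrict:
  fixes Q :: "'v \<Rightarrow> 'v \<Rightarrow> real" and t b :: "'v \<Rightarrow> real"
  assumes fin: "finite V"
    and Qnn: "\<And>i j. i \<in> V \<Longrightarrow> j \<in> V \<Longrightarrow> Q j i \<ge> 0"
    and tnn: "\<And>i. i \<in> V \<Longrightarrow> t i \<ge> 0"
    and bnn: "\<And>i. i \<in> V \<Longrightarrow> b i \<ge> 0"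
    and eq: "\<And>i. i \<in> V \<Longrightarrow> t i = (\<Sum>j\<in>V. t j * Q j i) + b i"
    and CV: "C \<subseteq> V"
    and cl: "\<And>j i. j \<in> C \<Longrightarrow> i \<in> V - C \<Longrightarrow> Q j i = 0"
    and rs: "\<And>j. j \<in> C \<Longrightarrow> (\<Sum>i\<in>C. Q j i) = 1"
    and i: "i \<in> C"
  shows "t i = (\<Sum>j\<in>C. t j * Q j i)"
proof -
  define x where "x i = (\<Sum>j\<in>V - C. t j * Q j i) + b i" for i
  have finC: "finite C" using fin CV finite_subset by auto
  have split: "(\<Sum>j\<in>V. t j * Q j i) = (\<Sum>j\<in>C. t j * Q j i) + (\<Sum>j\<in>V - C. t j * Q j i)" for i
    using sum.subset_diff[OF CV fin, of "\<lambda>j. t j * Q j i"] by linarith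
  have eqx: "t i = (\<Sum>j\<in>C. t j * Q j i) + x i" if "i \<in> C" for i
    using eq[of i] that CV split[of i] unfolding x_def by auto
  have x0: "x i \<ge> 0" if "i \<in> C" for i
    unfolding x_def using that CV Qnn tnn bnn
    by (intro add_nonneg_nonneg sum_nonneg mult_nonneg_nonneg) auto
  have "(\<Sum>i\<in>C. t i) = (\<Sum>i\<in>C. \<Sum>j\<in>C. t j * Q j i) + (\<Sum>i\<in>C. x i)"
    using eqx by (simp add: sum.distrib)
  also have "(\<Sum>i\<in>C. \<Sum>j\<in>C. t j * Q j i) = (\<Sum>j\<in>C. t j * (\<Sum>i\<in>C. Q j i))"
    by (subst sum.swap) (simp add: sum_distrib_left)
  also have "\<dots> = (\<Sum>j\<in>C. t j)" using rs by simp
  finally have "(\<Sum>i\<in>C. x i) = 0" by simp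
  then have "x i = 0" using sum_nonneg_eq_0_iff[OF finC, of x] x0 i by auto
  then show ?thesis using eqx[OF i] by simp
qed

lemma feasible_traffic_eqs: "feasible N phi \<Longrightarrow> traffic_eqs N phi (traffic N phi)"
  unfolding feasible_def traffic_def by (metis theI')

lemma feasible_traffic_unique: "feasible N phi \<Longrightarrow> traffic_eqs N phi t \<Longrightarrow> traffic N phi = t"
  unfolding feasible_def traffic_def by (metis the1_equality)

lemma fc_zero: "flow_conservation N phi \<Longrightarrow> \<not> (in_dom N i a k \<and> in_targets N j) \<Longrightarrow> phi i j a k = 0"
  unfolding flow_conservation_def by blast

lemma fc_range: "flow_conservation N phi \<Longrightarrow> in_dom N i a k \<Longrightarrow> in_targets N j \<Longrightarrow> 0 \<le> phi i j a k \<and> phi i j a k \<le> 1"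
  unfolding flow_conservation_def by blast

lemma fc_link: "flow_conservation N phi \<Longrightarrow> in_dom N i a k \<Longrightarrow> (i, j) \<notin> links N \<Longrightarrow> phi i (Some j) a k = 0"
  unfolding flow_conservation_def by blast

lemma fc_last: "flow_conservation N phi \<Longrightarrow> phi i None a (ntasks N a) = 0"
  unfolding flow_conservation_def by blast

lemma fc_sum: "flow_conservation N phi \<Longrightarrow> in_dom N i a k \<Longrightarrow>
   (\<Sum>j\<in>nodes N. phi i (Some j) a k) + phi i None a k = (if k = ntasks N a \<and> i = dest N a then 0 else 1)"
  unfolding flow_conservation_def by blast

lemma in_targets_simps[simp]: "in_targets N None" "in_targets N (Some j) \<longleftrightarrow> j \<in> nodes N"
  by (auto simp: in_targets_def)

lemma te_eq: "traffic_eqs N phi t \<Longrightarrow> in_dom N i a k \<Longrightarrow>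
   t i a k = (\<Sum>j\<in>nodes N. t j a k * phi j (Some i) a k) +
                  (if k = 0 then rate N i a else t i a (k - 1) * phi i None a (k - 1))"
  unfolding traffic_eqs_def by blast

lemma te_zero: "traffic_eqs N phi t \<Longrightarrow> \<not> in_dom N i a k \<Longrightarrow> t i a k = 0"
  unfolding traffic_eqs_def by blast

lemma wf_finite: "well_formed_network N \<Longrightarrow> finite (nodes N)"
  unfolding well_formed_network_def by blast

lemma wf_rate: "well_formed_network N \<Longrightarrow> i \<in> nodes N \<Longrightarrow> a \<in> apps N \<Longrightarrow> rate N i a \<ge> 0"
  unfolding well_formed_network_def by blast

lemma pos_feasibleD:
  assumes "p \<in> pos_feasible N"
  shows "feasible N p" "flow_conservation N p" "traffic_eqs N p (traffic N p)"
    "\<And>i a k. in_dom N i a k \<Longrightarrow> traffic N p i a k > 0"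
  using assms feasible_traffic_eqs[of N p] by (auto simp: pos_feasible_def feasible_def)

lemma uniq_stage:
  assumes wf: "well_formed_network N"
    and p: "p \<in> pos_feasible N"
    and fcq: "flow_conservation N q"
    and supp: "\<And>i j a k. in_dom N i a k \<Longrightarrow> in_targets N j \<Longrightarrow> q i j a k = 0 \<Longrightarrow> p i j a k = 0"
    and t1: "traffic_eqs N q t" and t2: "traffic_eqs N q t'"
    and a: "a \<in> apps N" and k: "k \<le> ntasks N a"
    and IH: "k > 0 \<Longrightarrow> \<forall>i. t i a (k-1) = t' i a (k-1)"
  shows "\<forall>i\<in>nodes N. t i a k = t' i a k"
proof (rule ccontr)
  let ?V = "nodes N"
  have fin: "finite ?V" using wf by (rule wf_finite)
  have dom: "in_dom N i a k" if "i \<in> ?V" for i using that a k by (simp add: in_dom_def)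
  have fcp: "flow_conservation N p" and Teq: "traffic_eqs N p (traffic N p)"
    and Tpos: "\<And>i a k. in_dom N i a k \<Longrightarrow> traffic N p i a k > 0" and fp: "feasible N p"
    using pos_feasibleD[OF p] by auto
  assume "\<not> ?thesis"
  then obtain j0 where j0: "j0 \<in> ?V" "t j0 a k - t' j0 a k \<noteq> 0" by auto
  define d where "d i = t i a k - t' i a k" for i
  define P where "P j i = q j (Some i) a k" for j i
  have H: "d i = (\<Sum>j\<in>?V. d j * P j i)" if i: "i \<in> ?V" for i
  proof -
    have B: "(if k = 0 then rate N i a else t i a (k - 1) * q i None a (k - 1)) = (if k = 0 then rate N i a else t' i a (k - 1) * q i None a (k - 1))"
      using IH by auto
    have e1: "t i a k = (\<Sum>j\<in>?V. t j a k * q j (Some i) a k) + (if k = 0 then rate N i a else t i a (k - 1) * q i None a (k - 1))"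
      by (rule te_eq[OF t1 dom[OF i]])
    have e2: "t' i a k = (\<Sum>j\<in>?V. t' j a k * q j (Some i) a k) + (if k = 0 then rate N i a else t' i a (k - 1) * q i None a (k - 1))"
      by (rule te_eq[OF t2 dom[OF i]])
    have "(\<Sum>j\<in>?V. d j * P j i) = (\<Sum>j\<in>?V. t j a k * q j (Some i) a k) - (\<Sum>j\<in>?V. t' j a k * q j (Some i) a k)"
      unfolding d_def P_def by (simp add: sum_subtractf left_diff_distrib)
    then show ?thesis using e1 e2 B unfolding d_def by linarith
  qed
  have Pnn: "P j i \<ge> 0" if "i \<in> ?V" "j \<in> ?V" for i j
    using fc_range[OF fcq dom[OF that(2)], of "Some i"] that unfolding P_def by simp
  have R1: "(\<Sum>i\<in>?V. P j i) \<le> 1" if "j \<in> ?V" for j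
    using fc_sum[OF fcq dom[OF that]] fc_range[OF fcq dom[OF that], of None] unfolding P_def
    by (auto split: if_splits)
  obtain C where C: "C \<subseteq> ?V" "j0 \<in> C" "\<forall>j\<in>C. \<forall>i\<in>?V. P j i \<noteq> 0 \<longrightarrow> i \<in> C" "\<forall>j\<in>C. (\<Sum>i\<in>?V. P j i) = 1"
    using closed_class[OF fin, of P d j0] Pnn R1 H j0 unfolding d_def by blast
  have jC: "q j None a k = 0 \<and> \<not> (k = ntasks N a \<and> j = dest N a)" if "j \<in> C" for j
  proof -
    have jV: "j \<in> ?V" using C(1) that by auto
    have "(\<Sum>i\<in>?V. q j (Some i) a k) = 1" using C(4) that unfolding P_def by auto
    then show ?thesis using fc_sum[OF fcq dom[OF jV]] fc_range[OF fcq dom[OF jV], of None]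
      by (auto split: if_splits)
  qed
  have pNone: "p j None a k = 0" if "j \<in> C" for j
    using supp[OF dom, of j None] jC[OF that] C(1) that by auto
  have pout: "p j (Some i) a k = 0" if "j \<in> C" "i \<in> ?V - C" for j i
  proof -
    have "q j (Some i) a k = 0" using C(3) that unfolding P_def by auto
    then show ?thesis using supp[OF dom, of j "Some i"] C(1) that by auto
  qed
  have prs: "(\<Sum>i\<in>C. p j (Some i) a k) = 1" if j: "j \<in> C" for j
  proof -
    have jV: "j \<in> ?V" using C(1) j by auto
    have s1: "(\<Sum>i\<in>?V. p j (Some i) a k) = 1"
      using fc_sum[OF fcp dom[OF jV]] jC[OF j] pNone[OF j] by auto
    have "(\<Sum>i\<in>?V. p j (Some i) a k) = (\<Sum>i\<in>?V - C. p j (Some i) a k) + (\<Sum>i\<in>C. p j (Some i) a k)"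
      using sum.subset_diff[OF C(1) fin] by blast
    moreover have "(\<Sum>i\<in>?V - C. p j (Some i) a k) = 0"
      using pout[OF j] by simp
    ultimately show ?thesis using s1 by simp
  qed
  define T where "T = traffic N p"
  have Tc: "T i a k = (\<Sum>j\<in>C. T j a k * p j (Some i) a k)" if i: "i \<in> C" for i
  proof (rule closed_restrict[OF fin, of "\<lambda>j i. p j (Some i) a k" "\<lambda>i. T i a k"
        "\<lambda>i. if k = 0 then rate N i a else T i a (k-1) * p i None a (k-1)" C i])
    show "\<And>i j. i \<in> ?V \<Longrightarrow> j \<in> ?V \<Longrightarrow> 0 \<le> p j (Some i) a k"
      using fc_range[OF fcp dom] by simp
    show "\<And>i. i \<in> ?V \<Longrightarrow> 0 \<le> T i a k"
      using Tpos[OF dom] unfolding T_def by (simp add: less_imp_le)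
    show "\<And>i. i \<in> ?V \<Longrightarrow> 0 \<le> (if k = 0 then rate N i a else T i a (k-1) * p i None a (k-1))"
    proof -
      fix i assume i: "i \<in> ?V"
      have d1: "k > 0 \<Longrightarrow> in_dom N i a (k-1)" using i a k by (simp add: in_dom_def)
      show "0 \<le> (if k = 0 then rate N i a else T i a (k-1) * p i None a (k-1))"
        using wf_rate[OF wf i a] Tpos[OF d1] fc_range[OF fcp d1, of None] unfolding T_def
        by (auto intro: mult_nonneg_nonneg less_imp_le)
    qed
    show "\<And>i. i \<in> ?V \<Longrightarrow> T i a k = (\<Sum>j\<in>?V. T j a k * p j (Some i) a k) +
          (if k = 0 then rate N i a else T i a (k-1) * p i None a (k-1))"
      using te_eq[OF Teq dom] unfolding T_def by blast
  qed (use C(1) pout prs i in auto)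
  define e where "e i a' k' = (if a' = a \<and> k' = k \<and> i \<in> C then T i a k else 0)" for i a' k'
  have eeq: "e i a' k' = (\<Sum>j\<in>?V. e j a' k' * p j (Some i) a' k') + (if k' = 0 then 0 else e i a' (k'-1) * p i None a' (k'-1))"
    if dm: "in_dom N i a' k'" for i a' k'
  proof -
    have i: "i \<in> ?V" using dm by (simp add: in_dom_def)
    consider "a' \<noteq> a" | "a' = a" "k' = k" | "a' = a" "k' = Suc k" | "a' = a" "k' \<noteq> k" "k' \<noteq> Suc k" by blast
    then show ?thesis
    proof cases
      case 1 then show ?thesis by (simp add: e_def)
    next
      case 2
      have "(\<Sum>j\<in>?V. e j a k * p j (Some i) a k) = (\<Sum>j\<in>?V. if j \<in> C then T j a k * p j (Some i) a k else 0)"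
        by (rule sum.cong) (auto simp: e_def)
      also have "\<dots> = (\<Sum>j\<in>?V \<inter> C. T j a k * p j (Some i) a k)"
        by (simp add: sum.inter_restrict fin)
      also have "?V \<inter> C = C" using C(1) by auto
      finally have s: "(\<Sum>j\<in>?V. e j a k * p j (Some i) a k) = (\<Sum>j\<in>C. T j a k * p j (Some i) a k)" .
      have lhs: "e i a k = (\<Sum>j\<in>C. T j a k * p j (Some i) a k)"
      proof (cases "i \<in> C")
        case True then show ?thesis using Tc by (simp add: e_def)
      next
        case False then show ?thesis using pout i by (simp add: e_def)
      qed
      have "(if k = 0 then 0 else e i a (k-1) * p i None a (k-1)) = 0" by (auto simp: e_def)
      then show ?thesis using 2 s lhs by (simp only:)
    next
      case 3
      have "e i a k * p i None a k = 0" using pNone by (simp add: e_def)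
      then show ?thesis using 3 by (simp add: e_def)
    next
      case 4
      then show ?thesis by (auto simp: e_def)
    qed
  qed
  have "traffic_eqs N p (\<lambda>i a' k'. T i a' k' - e i a' k')"
    unfolding traffic_eqs_def
  proof (intro conjI allI impI)
    fix i a' k' assume dm: "in_dom N i a' k'"
    have tq: "T i a' k' = (\<Sum>j\<in>?V. T j a' k' * p j (Some i) a' k') +
                  (if k' = 0 then rate N i a' else T i a' (k' - 1) * p i None a' (k' - 1))"
      using te_eq[OF Teq dm] unfolding T_def .
    have ss: "(\<Sum>j\<in>?V. (T j a' k' - e j a' k') * p j (Some i) a' k') =
        (\<Sum>j\<in>?V. T j a' k' * p j (Some i) a' k') - (\<Sum>j\<in>?V. e j a' k' * p j (Some i) a' k')"
      by (simp add: sum_subtractf left_diff_distrib)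
    show "T i a' k' - e i a' k' = (\<Sum>j\<in>?V. (T j a' k' - e j a' k') * p j (Some i) a' k') +
        (if k' = 0 then rate N i a' else (T i a' (k' - 1) - e i a' (k' - 1)) * p i None a' (k' - 1))"
      using tq ss eeq[OF dm] by (cases "k' = 0") (simp_all add: left_diff_distrib)
  next
    fix i a' k' assume dm: "\<not> in_dom N i a' k'"
    have "e i a' k' = 0" using dm C(1) a k by (auto simp: e_def in_dom_def)
    then show "T i a' k' - e i a' k' = 0" using te_zero[OF Teq dm] unfolding T_def by simp
  qed
  then have "T = (\<lambda>i a' k'. T i a' k' - e i a' k')"
    using feasible_traffic_unique[OF fp] unfolding T_def by blast
  then have "\<forall>i a' k'. e i a' k' = 0" by (simp add: fun_eq_iff)
  then have "e j0 a k = 0" by blast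
  moreover have "T j0 a k > 0" using Tpos[OF dom] C(1,2) unfolding T_def by auto
  ultimately show False using C(2) by (simp add: e_def)
qed

lemma uniq_traffic:
  assumes wf: "well_formed_network N"
    and p: "p \<in> pos_feasible N"
    and fcq: "flow_conservation N q"
    and supp: "\<And>i j a k. in_dom N i a k \<Longrightarrow> in_targets N j \<Longrightarrow> q i j a k = 0 \<Longrightarrow> p i j a k = 0"
    and t1: "traffic_eqs N q t" and t2: "traffic_eqs N q t'"
  shows "t = t'"
proof (intro ext)
  fix i a k
  show "t i a k = t' i a k"
  proof (cases "in_dom N i a k")
    case False then show ?thesis using te_zero[OF t1] te_zero[OF t2] by simp
  next
    case True
    then have a: "a \<in> apps N" and i: "i \<in> nodes N" and k: "k \<le> ntasks N a"
      by (auto simp: in_dom_def)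
    have "\<forall>k. k \<le> ntasks N a \<longrightarrow> (\<forall>i\<in>nodes N. t i a k = t' i a k)"
    proof (intro allI impI)
      fix k assume "k \<le> ntasks N a"
      then show "\<forall>i\<in>nodes N. t i a k = t' i a k"
      proof (induction k)
        case 0
        show ?case by (rule uniq_stage[OF wf p fcq supp t1 t2 a 0]) auto
      next
        case (Suc k)
        have IH: "\<forall>i. t i a k = t' i a k"
        proof
          fix i show "t i a k = t' i a k"
          proof (cases "i \<in> nodes N")
            case True then show ?thesis using Suc by auto
          next
            case False
            then have "\<not> in_dom N i a k" by (simp add: in_dom_def)
            then show ?thesis using te_zero[OF t1] te_zero[OF t2] by simp
          qed
        qed
        have IH2: "Suc k > 0 \<Longrightarrow> \<forall>i. t i a (Suc k - 1) = t' i a (Suc k - 1)" using IH by simp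
        show ?case by (rule uniq_stage[OF wf p fcq supp t1 t2 a Suc.prems IH2])
      qed
    qed
    then show ?thesis using i k by blast
  qed
qed

definition comb :: "real \<Rightarrow> ('v, 'a) strategy \<Rightarrow> ('v, 'a) strategy \<Rightarrow> ('v, 'a) strategy" where
  "comb s f1 f2 = (\<lambda>i j a k. (1 - s) * f1 i j a k + s * f2 i j a k)"

lemma gamma_comb: "gamma N p1 p2 s = phi_of N (comb s (flow_of N p1) (flow_of N p2))"
  by (simp add: gamma_def comb_def)

lemma sum_comb: "(\<Sum>j\<in>A. (1 - s) * x j + s * (y j::real)) = (1 - s) * (\<Sum>j\<in>A. x j) + s * (\<Sum>j\<in>A. y j)"
  by (simp add: sum.distrib sum_distrib_left)

lemma outflow_comb: "outflow N (comb s f1 f2) i a k = (1 - s) * outflow N f1 i a k + s * outflow N f2 i a k"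
  unfolding outflow_def comb_def sum_comb by (simp add: algebra_simps)

lemma inflow_comb: "inflow N (comb s f1 f2) i a k = (1 - s) * inflow N f1 i a k + s * inflow N f2 i a k"
  unfolding inflow_def comb_def sum_comb by (cases "k = 0") (simp_all add: algebra_simps)

lemma tof_comb: "traffic_of_flow N (comb s f1 f2) i a k = (1 - s) * traffic_of_flow N f1 i a k + s * traffic_of_flow N f2 i a k"
  by (simp add: traffic_of_flow_def outflow_comb inflow_comb algebra_simps)

lemma outflow_flow:
  assumes "feasible N phi" "in_dom N i a k"
  shows "outflow N (flow_of N phi) i a k = traffic N phi i a k * (if k = ntasks N a \<and> i = dest N a then 0 else 1)"
proof -
  have fc: "flow_conservation N phi" using assms(1) by (simp add: feasible_def)
  have "outflow N (flow_of N phi) i a k = traffic N phi i a k * ((\<Sum>j\<in>nodes N. phi i (Some j) a k) + phi i None a k)"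
    by (simp add: outflow_def flow_of_def sum_distrib_left distrib_left)
  then show ?thesis using fc_sum[OF fc assms(2)] by simp
qed

lemma inflow_flow:
  assumes "feasible N phi" "in_dom N i a k"
  shows "inflow N (flow_of N phi) i a k = traffic N phi i a k"
  using te_eq[OF feasible_traffic_eqs[OF assms(1)] assms(2)]
  by (simp add: inflow_def flow_of_def)

lemma tof_flow:
  assumes "feasible N phi" "in_dom N i a k"
  shows "traffic_of_flow N (flow_of N phi) i a k = traffic N phi i a k"
  using outflow_flow[OF assms] inflow_flow[OF assms] unfolding traffic_of_flow_def
  by (cases "k = ntasks N a \<and> i = dest N a") auto

lemma phi_of_flow:
  assumes "phi \<in> pos_feasible N"
  shows "phi_of N (flow_of N phi) = phi"
proof (intro ext)
  fix i j a k
  note pf = pos_feasibleD[OF assms]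
  show "phi_of N (flow_of N phi) i j a k = phi i j a k"
  proof (cases "in_dom N i a k \<and> in_targets N j")
    case True
    then have "traffic N phi i a k > 0" using pf by auto
    then show ?thesis using True tof_flow[OF pf(1), of i a k] by (simp add: phi_of_def flow_of_def)
  next
    case False
    then show ?thesis using fc_zero[OF pf(2) False] unfolding phi_of_def by auto
  qed
qed

lemma convex_on_eq_on:
  assumes "convex_on S f" "\<And>x. x \<in> S \<Longrightarrow> g x = f x"
  shows "convex_on S g"
  using assms unfolding convex_on_def convex_def by auto

lemma flow_nn:
  assumes "p \<in> pos_feasible N" "in_dom N i a k" "in_targets N j"
  shows "0 \<le> flow_of N p i j a k"
proof -
  have "traffic N p i a k > 0" using pos_feasibleD(4)[OF assms(1,2)] .
  moreover have "0 \<le> p i j a k" using fc_range[OF pos_feasibleD(2)[OF assms(1)] assms(2,3)] by simp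
  ultimately show ?thesis unfolding flow_of_def by simp
qed

lemma flow_zero: "p \<in> pos_feasible N \<Longrightarrow> in_dom N i a k \<Longrightarrow> flow_of N p i j a k = 0 \<Longrightarrow> p i j a k = 0"
  using pos_feasibleD(4)[of p N i a k] unfolding flow_of_def by auto

lemma gamma_props:
  assumes wf: "well_formed_network N" and p1: "p1 \<in> pos_feasible N" and p2: "p2 \<in> pos_feasible N"
    and s0: "0 \<le> s" and s1: "s \<le> 1"
  shows "gamma N p1 p2 s \<in> pos_feasible N \<and>
    (\<forall>i j a k. in_dom N i a k \<longrightarrow> in_targets N j \<longrightarrow>
        flow_of N (gamma N p1 p2 s) i j a k = comb s (flow_of N p1) (flow_of N p2) i j a k)"
proof -
  note P1 = pos_feasibleD[OF p1] and P2 = pos_feasibleD[OF p2]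
  let ?V = "nodes N"
  define f1 where "f1 = flow_of N p1"
  define f2 where "f2 = flow_of N p2"
  define fs where "fs = comb s f1 f2"
  define q where "q = gamma N p1 p2 s"
  define tt where "tt = (\<lambda>i a k. (1 - s) * traffic N p1 i a k + s * traffic N p2 i a k)"
  have qdef: "q = phi_of N fs" unfolding q_def fs_def f1_def f2_def by (rule gamma_comb)
  have ttpos: "tt i a k > 0" if dm: "in_dom N i a k" for i a k
  proof (cases "s < 1")
    case True
    have "(1 - s) * traffic N p1 i a k > 0" using True P1(4)[OF dm] by simp
    moreover have "s * traffic N p2 i a k \<ge> 0" using s0 P2(4)[OF dm] by simp
    ultimately show ?thesis unfolding tt_def by linarith
  next
    case False
    then have "s = 1" using s1 by simp
    then show ?thesis using P2(4)[OF dm] unfolding tt_def by simp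
  qed
  have tof: "traffic_of_flow N fs i a k = tt i a k" if dm: "in_dom N i a k" for i a k
    unfolding fs_def tof_comb f1_def f2_def tof_flow[OF P1(1) dm] tof_flow[OF P2(1) dm] tt_def ..
  have q_eq: "q i j a k = fs i j a k / tt i a k" if "in_dom N i a k" "in_targets N j" for i j a k
    using that tof unfolding qdef phi_of_def by simp
  have q_out: "q i j a k = 0" if "\<not> (in_dom N i a k \<and> in_targets N j)" for i j a k
    using that unfolding qdef phi_of_def by auto
  have fs_nn: "fs i j a k \<ge> 0" if "in_dom N i a k" "in_targets N j" for i j a k
    unfolding fs_def comb_def f1_def f2_def using flow_nn[OF p1 that] flow_nn[OF p2 that] s0 s1
    by (intro add_nonneg_nonneg mult_nonneg_nonneg) auto
  have outs: "outflow N fs i a k = tt i a k * (if k = ntasks N a \<and> i = dest N a then 0 else 1)"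
    if dm: "in_dom N i a k" for i a k
    unfolding fs_def outflow_comb f1_def f2_def outflow_flow[OF P1(1) dm] outflow_flow[OF P2(1) dm] tt_def
    by (simp add: algebra_simps)
  have fs_le: "fs i j a k \<le> outflow N fs i a k" if dm: "in_dom N i a k" and jt: "in_targets N j" for i j a k
  proof (cases j)
    case None
    have "(\<Sum>j\<in>?V. fs i (Some j) a k) \<ge> 0" using fs_nn[OF dm] by (intro sum_nonneg) simp
    then show ?thesis using None unfolding outflow_def by simp
  next
    case (Some j')
    then have j': "j' \<in> ?V" using jt by simp
    have "fs i (Some j') a k \<le> (\<Sum>j\<in>?V. fs i (Some j) a k)"
      by (rule member_le_sum) (use j' fs_nn[OF dm] wf_finite[OF wf] in auto)
    then show ?thesis using Some fs_nn[OF dm, of None] unfolding outflow_def by simp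
  qed
  have q01: "0 \<le> q i j a k \<and> q i j a k \<le> 1" if h: "in_dom N i a k \<and> in_targets N j" for i j a k
  proof -
    have tp: "tt i a k > 0" using ttpos h by blast
    have "fs i j a k \<le> tt i a k"
      using fs_le[of i a k j] h outs[of i a k] tp by (auto split: if_splits)
    then show ?thesis
      using q_eq[of i a k j] h fs_nn[of i a k j] tp by simp
  qed
  have fc: "flow_conservation N q"
    unfolding flow_conservation_def
  proof (intro conjI allI impI)
    fix i j a k assume "\<not> (in_dom N i a k \<and> in_targets N j)"
    then show "q i j a k = 0" by (rule q_out)
  next
    fix i j a k assume h: "in_dom N i a k \<and> in_targets N j"
    then show "0 \<le> q i j a k" using q01 by blast
  next
    fix i j a k assume h: "in_dom N i a k \<and> in_targets N j"
    then show "q i j a k \<le> 1" using q01 by blast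
  next
    fix i j a k assume h: "in_dom N i a k \<and> (i, j) \<notin> links N"
    show "q i (Some j) a k = 0"
    proof (cases "j \<in> ?V")
      case False then show ?thesis using q_out by simp
    next
      case True
      have "p1 i (Some j) a k = 0" "p2 i (Some j) a k = 0"
        using h fc_link[OF P1(2)] fc_link[OF P2(2)] by auto
      then have "fs i (Some j) a k = 0" unfolding fs_def comb_def f1_def f2_def flow_of_def by simp
      then show ?thesis using q_eq[of i a k "Some j"] h True by simp
    qed
  next
    fix i a
    have "p1 i None a (ntasks N a) = 0" "p2 i None a (ntasks N a) = 0"
      using fc_last[OF P1(2)] fc_last[OF P2(2)] by auto
    then have "fs i None a (ntasks N a) = 0" unfolding fs_def comb_def f1_def f2_def flow_of_def by simp
    then show "q i None a (ntasks N a) = 0" unfolding qdef phi_of_def by simp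
  next
    fix i a k assume dm: "in_dom N i a k"
    have "(\<Sum>j\<in>?V. q i (Some j) a k) + q i None a k
        = ((\<Sum>j\<in>?V. fs i (Some j) a k) + fs i None a k) / tt i a k"
      using q_eq[OF dm] by (simp add: sum_divide_distrib add_divide_distrib)
    also have "\<dots> = outflow N fs i a k / tt i a k" unfolding outflow_def ..
    also have "\<dots> = (if k = ntasks N a \<and> i = dest N a then 0 else 1)"
      using outs[OF dm] ttpos[OF dm] by simp
    finally show "(\<Sum>j\<in>?V. q i (Some j) a k) + q i None a k = (if k = ntasks N a \<and> i = dest N a then 0 else 1)" .
  qed
  have te: "traffic_eqs N q tt"
    unfolding traffic_eqs_def
  proof (intro conjI allI impI)
    fix i a k assume dm: "in_dom N i a k"
    then have i: "i \<in> ?V" and a: "a \<in> apps N" and k: "k \<le> ntasks N a" by (auto simp: in_dom_def)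
    have "(\<Sum>j\<in>?V. tt j a k * q j (Some i) a k) = (\<Sum>j\<in>?V. fs j (Some i) a k)"
    proof (rule sum.cong)
      fix j assume j: "j \<in> ?V"
      then have dj: "in_dom N j a k" using a k by (simp add: in_dom_def)
      show "tt j a k * q j (Some i) a k = fs j (Some i) a k"
        using q_eq[OF dj, of "Some i"] i ttpos[OF dj] by simp
    qed simp
    moreover have "k > 0 \<Longrightarrow> tt i a (k - 1) * q i None a (k - 1) = fs i None a (k - 1)"
    proof -
      assume "k > 0"
      then have dk: "in_dom N i a (k - 1)" using i a k by (simp add: in_dom_def)
      show ?thesis using q_eq[OF dk, of None] ttpos[OF dk] by simp
    qed
    ultimately have "(\<Sum>j\<in>?V. tt j a k * q j (Some i) a k) +
          (if k = 0 then rate N i a else tt i a (k - 1) * q i None a (k - 1)) = inflow N fs i a k"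
      unfolding inflow_def by simp
    also have "\<dots> = tt i a k"
      unfolding fs_def inflow_comb f1_def f2_def inflow_flow[OF P1(1) dm] inflow_flow[OF P2(1) dm] tt_def ..
    finally show "tt i a k = (\<Sum>j\<in>?V. tt j a k * q j (Some i) a k) +
          (if k = 0 then rate N i a else tt i a (k - 1) * q i None a (k - 1))" by simp
  next
    fix i a k assume dm: "\<not> in_dom N i a k"
    show "tt i a k = 0" unfolding tt_def using te_zero[OF P1(3) dm] te_zero[OF P2(3) dm] by simp
  qed
  define pm where "pm = (if s < 1 then p1 else p2)"
  have pm: "pm \<in> pos_feasible N" using p1 p2 unfolding pm_def by simp
  have supp: "pm i j a k = 0" if dm: "in_dom N i a k" and jt: "in_targets N j" and q0: "q i j a k = 0" for i j a k
  proof -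
    have "fs i j a k = 0" using q0 q_eq[OF dm jt] ttpos[OF dm] by simp
    then have z: "(1 - s) * f1 i j a k + s * f2 i j a k = 0" unfolding fs_def comb_def .
    have n1: "(1 - s) * f1 i j a k \<ge> 0" using flow_nn[OF p1 dm jt] s1 unfolding f1_def by simp
    have n2: "s * f2 i j a k \<ge> 0" using flow_nn[OF p2 dm jt] s0 unfolding f2_def by simp
    show ?thesis
    proof (cases "s < 1")
      case True
      then have "f1 i j a k = 0" using z n1 n2 by (smt (verit) mult_eq_0_iff)
      then show ?thesis using True flow_zero[OF p1 dm] unfolding pm_def f1_def by simp
    next
      case False
      then have "s = 1" using s1 by simp
      then have "f2 i j a k = 0" using z by simp
      then show ?thesis using False flow_zero[OF p2 dm] unfolding pm_def f2_def by simp
    qed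
  qed
  have uq: "\<And>t'. traffic_eqs N q t' \<Longrightarrow> t' = tt"
    using uniq_traffic[OF wf pm fc supp] te by blast
  have feas: "feasible N q" unfolding feasible_def using fc te uq by blast
  have tr: "traffic N q = tt" using feasible_traffic_unique[OF feas te] .
  have "q \<in> pos_feasible N" unfolding pos_feasible_def using feas tr ttpos by simp
  moreover have "flow_of N q i j a k = fs i j a k" if "in_dom N i a k" "in_targets N j" for i j a k
    using q_eq[OF that] tr ttpos[OF that(1)] unfolding flow_of_def by simp
  ultimately show ?thesis unfolding q_def fs_def f1_def f2_def by blast
qed

lemma double_sum_comb:
  "(\<Sum>a\<in>A. \<Sum>k\<in>B a. w a k * ((1 - s) * x a k + s * y a k)) =
   (1 - s) * (\<Sum>a\<in>A. \<Sum>k\<in>B a. w a k * x a k) + s * (\<Sum>a\<in>A. \<Sum>k\<in>B a. w a k * (y a k :: real))"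
proof -
  have "(\<Sum>a\<in>A. \<Sum>k\<in>B a. w a k * ((1 - s) * x a k + s * y a k)) =
        (\<Sum>a\<in>A. \<Sum>k\<in>B a. (1 - s) * (w a k * x a k) + s * (w a k * y a k))"
    by (simp add: algebra_simps)
  also have "\<dots> = (\<Sum>a\<in>A. (1 - s) * (\<Sum>k\<in>B a. w a k * x a k) + s * (\<Sum>k\<in>B a. w a k * y a k))"
    by (simp only: sum_comb)
  also have "\<dots> = (1 - s) * (\<Sum>a\<in>A. \<Sum>k\<in>B a. w a k * x a k) + s * (\<Sum>a\<in>A. \<Sum>k\<in>B a. w a k * y a k)"
    by (simp only: sum_comb)
  finally show ?thesis .
qed

theorem proposition3:
  fixes N :: "('v, 'a) network"
    and D :: "'v \<Rightarrow> 'v \<Rightarrow> real \<Rightarrow> real" and D' :: "'v \<Rightarrow> 'v \<Rightarrow> real \<Rightarrow> real"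
    and C :: "'v \<Rightarrow> real \<Rightarrow> real" and C' :: "'v \<Rightarrow> real \<Rightarrow> real"
  assumes "well_formed_network N"
    and "\<And>i j. (i, j) \<in> links N \<Longrightarrow> mono (D i j)"
    and "\<And>i j. (i, j) \<in> links N \<Longrightarrow> convex_on UNIV (D i j)"
    and "\<And>i j x. (i, j) \<in> links N \<Longrightarrow> (D i j has_real_derivative D' i j x) (at x)"
    and "\<And>i j. (i, j) \<in> links N \<Longrightarrow> continuous_on UNIV (D' i j)"
    and "\<And>i. i \<in> nodes N \<Longrightarrow> mono (C i)"
    and "\<And>i. i \<in> nodes N \<Longrightarrow> convex_on UNIV (C i)"
    and "\<And>i x. i \<in> nodes N \<Longrightarrow> (C i has_real_derivative C' i x) (at x)"
    and "\<And>i. i \<in> nodes N \<Longrightarrow> continuous_on UNIV (C' i)"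
  shows "bij_betw (flow_of N) (pos_feasible N) (flow_of N ` pos_feasible N)
       \<and> (\<forall>phi\<in>pos_feasible N. phi_of N (flow_of N phi) = phi)
       \<and> curve_family (pos_feasible N) (gamma N)
       \<and> geodesically_convex (pos_feasible N) (gamma N) (total_cost N D C)"
proof -
  note wf = assms(1)
  have inv: "\<forall>phi\<in>pos_feasible N. phi_of N (flow_of N phi) = phi"
    using phi_of_flow by blast
  have bij: "bij_betw (flow_of N) (pos_feasible N) (flow_of N ` pos_feasible N)"
    unfolding bij_betw_def using inj_on_inverseI[of "pos_feasible N" "phi_of N" "flow_of N"] inv by auto
  have cf: "curve_family (pos_feasible N) (gamma N)"
    unfolding curve_family_def
  proof (intro ballI conjI)
    fix x1 x2 assume x1: "x1 \<in> pos_feasible N" and x2: "x2 \<in> pos_feasible N"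
    have "comb 0 (flow_of N x1) (flow_of N x2) = flow_of N x1" by (simp add: comb_def)
    then show "gamma N x1 x2 0 = x1" using phi_of_flow[OF x1] by (simp add: gamma_comb)
    have "comb 1 (flow_of N x1) (flow_of N x2) = flow_of N x2" by (simp add: comb_def)
    then show "gamma N x1 x2 1 = x2" using phi_of_flow[OF x2] by (simp add: gamma_comb)
    fix s :: real assume "s \<in> {0..1}"
    then show "gamma N x1 x2 s \<in> pos_feasible N" using gamma_props[OF wf x1 x2] by auto
  qed
  have gc: "geodesically_convex (pos_feasible N) (gamma N) (total_cost N D C)"
    unfolding geodesically_convex_def
  proof (intro ballI)
    fix p1 p2 assume p1: "p1 \<in> pos_feasible N" and p2: "p2 \<in> pos_feasible N"
    have linksV: "links N \<subseteq> nodes N \<times> nodes N" using wf unfolding well_formed_network_def by blast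
    have finV: "finite (nodes N)" using wf_finite[OF wf] .
    have finL: "finite (links N)" using finite_subset[OF linksV] finV by blast
    define X where "X p i j = (\<Sum>a\<in>apps N. \<Sum>k\<le>ntasks N a. pktsize N a k * flow_of N p i (Some j) a k)" for p i j
    define Y where "Y p i = (\<Sum>a\<in>apps N. \<Sum>k\<le>ntasks N a. work N i a k * flow_of N p i None a k)" for p i
    define F where "F s = (\<Sum>(i, j)\<in>links N. D i j ((1 - s) * X p1 i j + s * X p2 i j)) +
        (\<Sum>i\<in>nodes N. C i ((1 - s) * Y p1 i + s * Y p2 i))" for s
    have cF: "convex_on {0..1} F"
      unfolding F_def
    proof (rule convex_on_add)
      show "convex_on {0..1} (\<lambda>s. \<Sum>(i, j)\<in>links N. D i j ((1 - s) * X p1 i j + s * X p2 i j))"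
        by (rule convex_on_sum_fun[OF finL]) (auto intro!: convex_affine_comp assms(3) simp: convex_real_interval)
      show "convex_on {0..1} (\<lambda>s. \<Sum>i\<in>nodes N. C i ((1 - s) * Y p1 i + s * Y p2 i))"
        by (rule convex_on_sum_fun[OF finV]) (auto intro!: convex_affine_comp assms(7) simp: convex_real_interval)
    qed
    show "convex_on {0..1} (\<lambda>s. total_cost N D C (gamma N p1 p2 s))"
    proof (rule convex_on_eq_on[OF cF])
      fix s :: real assume "s \<in> {0..1}"
      then have fl: "\<And>i j a k. in_dom N i a k \<Longrightarrow> in_targets N j \<Longrightarrow>
          flow_of N (gamma N p1 p2 s) i j a k = (1 - s) * flow_of N p1 i j a k + s * flow_of N p2 i j a k"
        using gamma_props[OF wf p1 p2] by (auto simp: comb_def)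
      have e1: "(\<Sum>a\<in>apps N. \<Sum>k\<le>ntasks N a. pktsize N a k * flow_of N (gamma N p1 p2 s) i (Some j) a k)
          = (1 - s) * X p1 i j + s * X p2 i j" if ij: "(i, j) \<in> links N" for i j
      proof -
        have "(\<Sum>a\<in>apps N. \<Sum>k\<le>ntasks N a. pktsize N a k * flow_of N (gamma N p1 p2 s) i (Some j) a k)
          = (\<Sum>a\<in>apps N. \<Sum>k\<le>ntasks N a. pktsize N a k * ((1 - s) * flow_of N p1 i (Some j) a k + s * flow_of N p2 i (Some j) a k))"
          using ij linksV by (intro sum.cong refl) (auto simp: fl in_dom_def)
        then show ?thesis unfolding X_def double_sum_comb .
      qed
      have e2: "(\<Sum>a\<in>apps N. \<Sum>k\<le>ntasks N a. work N i a k * flow_of N (gamma N p1 p2 s) i None a k)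
          = (1 - s) * Y p1 i + s * Y p2 i" if i: "i \<in> nodes N" for i
      proof -
        have "(\<Sum>a\<in>apps N. \<Sum>k\<le>ntasks N a. work N i a k * flow_of N (gamma N p1 p2 s) i None a k)
          = (\<Sum>a\<in>apps N. \<Sum>k\<le>ntasks N a. work N i a k * ((1 - s) * flow_of N p1 i None a k + s * flow_of N p2 i None a k))"
          using i by (intro sum.cong refl) (auto simp: fl in_dom_def)
        then show ?thesis unfolding Y_def double_sum_comb .
      qed
      show "total_cost N D C (gamma N p1 p2 s) = F s"
        unfolding total_cost_def Let_def F_def
        using e1 e2 by (intro arg_cong2[where f="(+)"] sum.cong) auto
    qed
  qed
  show ?thesis using bij inv cf gc by blast
qed

end
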